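(* Let $q$ be a prime power, $Q\in\mathbb{P}^2(\mathbb{F}_q)$, and $L_1,\dots,L_{q+1}$ the $\mathbb{F}_q$-lines through $Q$. Then for all sufficiently large $d$, \[ \mu_d(\mathcal{A}_0(Q))\le\frac{1}{1-q^{-2}}\prod_{i=1}^{q+1}\mu_d\big(R_{\mathrm{homog}}\setminus\mathcal{T}_{L_i,Q}\big), \] and for each $1\le j\le q+1$, \[ \mu_d(\mathcal{A}_{L_j}(Q))\le\mu_d(\mathcal{T}_{L_j,Q})\prod_{i\ne j}\mu_d\big(R_{\mathrm{homog}}\setminus\mathcal{T}_{L_i,Q}\big). \] Consequently, both inequalities also hold with $\mu_d$ replaced by $\mu$.
   Context: Let $R=\mathbb{F}_q[x,y,z]$, $R_d$ the homogeneous polynomials of degree $d$ (including $0$), $R_{\mathrm{homog}}=\bigcup_{d\ge1}R_d$, $\mu_d(\mathcal{A})=\#(\mathcal{A}\cap R_d)/\#R_d$, $\mu(\mathcal{A})=\lim_d\mu_d(\mathcal{A})$. $\mathcal{S}_Q$ is the set of $f\in R_{\mathrm{homog}}$ with $\{f=0\}$ singular at $Q$. For an $\mathbb{F}_q$-line $L\ni Q$, $\mathcal{T}_{L,Q}$ is the set of $f\in R_{\mathrm{homog}}$ whose restriction to $L$ vanishes to order at least $2$ at $Q$ ("$\{f=0\}$ tangent to $L$ at $Q$", including the singular case). Define $\mathcal{A}_0(Q)=R_{\mathrm{homog}}\setminus\bigcup_{i=1}^{q+1}\mathcal{T}_{L_i,Q}$ and, for an $\mathbb{F}_q$-line $L\ni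 Q$, $\mathcal{A}_L(Q)=\mathcal{T}_{L,Q}\setminus\mathcal{S}_Q$. *)

theory Defs
  imports "HOL-Computational_Algebra.Polynomial" Complex_Main
begin

text \<open>Polynomials in F_q[x,y,z] are represented by coefficient functions on exponent
  triples (i,j,k) (monomial x^i y^j z^k). The finite field F_q is a type 'a::{finite,field};
  q = CARD('a). Points of P^2(F_q) are represented by nonzero triples.\<close>

type_synonym 'a coeffs = "nat \<times> nat \<times> nat \<Rightarrow> 'a"

definition mdeg :: "nat \<times> nat \<times> nat \<Rightarrow> nat" where
  "mdeg m = (case m of (i,j,k) \<Rightarrow> i + j + k)"

definition Rd :: "nat \<Rightarrow> ('a::zero) coeffs set" where
  "Rd d = {f. \<forall>m. f m \<noteq> 0 \<longrightarrow> mdeg m = d}"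

definition Rhomog :: "('a::zero) coeffs set" where
  "Rhomog = (\<Union>d\<in>{1..}. Rd d)"

definition mu_d :: "nat \<Rightarrow> ('a::{finite,field}) coeffs set \<Rightarrow> real" where
  "mu_d d A = real (card (A \<inter> Rd d)) / real (card (Rd d :: 'a coeffs set))"

definition mu :: "('a::{finite,field}) coeffs set \<Rightarrow> real" where
  "mu A = lim (\<lambda>d. mu_d d A)"

definition peval :: "('a::field) coeffs \<Rightarrow> 'a \<times> 'a \<times> 'a \<Rightarrow> 'a" where
  "peval f P = (case P of (a,b,c) \<Rightarrow>
     (\<Sum>m\<in>{m. f m \<noteq> 0}. case m of (i,j,k) \<Rightarrow> f m * a^i * b^j * c^k))"

definition dx :: "('a::field) coeffs \<Rightarrow> 'a coeffs" where
  "dx f = (\<lambda>(i,j,k). of_nat (i+1) * f (i+1,j,k))"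
definition dy :: "('a::field) coeffs \<Rightarrow> 'a coeffs" where
  "dy f = (\<lambda>(i,j,k). of_nat (j+1) * f (i,j+1,k))"
definition dz :: "('a::field) coeffs \<Rightarrow> 'a coeffs" where
  "dz f = (\<lambda>(i,j,k). of_nat (k+1) * f (i,j,k+1))"

definition Sing :: "('a::field \<times> 'a \<times> 'a) \<Rightarrow> 'a coeffs set" where
  "Sing Q = {f \<in> Rhomog. peval f Q = 0 \<and> peval (dx f) Q = 0 \<and> peval (dy f) Q = 0
                          \<and> peval (dz f) Q = 0}"

text \<open>Projective points and F_q-lines through Q. A line is represented as the set of
  nonzero vectors in the 2-dimensional subspace spanned by Q and P.\<close>
definition proportional :: "('a::field \<times> 'a \<times> 'a) \<Rightarrow> 'a \<times> 'a \<times> 'a \<Rightarrow> bool" where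
  "proportional P Q = (\<exists>a. P = (a * fst Q, a * fst (snd Q), a * snd (snd Q)))"

definition lin2 :: "'a::field \<Rightarrow> 'a \<times> 'a \<times> 'a \<Rightarrow> 'a \<Rightarrow> 'a \<times> 'a \<times> 'a \<Rightarrow> 'a \<times> 'a \<times> 'a" where
  "lin2 a Q b P = (a * fst Q + b * fst P, a * fst (snd Q) + b * fst (snd P),
                   a * snd (snd Q) + b * snd (snd P))"

definition line :: "('a::field \<times> 'a \<times> 'a) \<Rightarrow> 'a \<times> 'a \<times> 'a \<Rightarrow> ('a \<times> 'a \<times> 'a) set" where
  "line Q P = {v. v \<noteq> (0,0,0) \<and> (\<exists>a b. v = lin2 a Q b P)}"

definition Lines :: "('a::field \<times> 'a \<times> 'a) \<Rightarrow> ('a \<times> 'a \<times> 'a) set set" where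
  "Lines Q = {line Q P | P. \<not> proportional P Q}"

text \<open>Restriction of f to the line through Q and P, in the affine coordinate u with
  Q at u = 0: the univariate polynomial u \<mapsto> f(Q + u P).\<close>
definition restr :: "('a::field) coeffs \<Rightarrow> 'a \<times> 'a \<times> 'a \<Rightarrow> 'a \<times> 'a \<times> 'a \<Rightarrow> 'a poly" where
  "restr f Q P = (case Q of (a,b,c) \<Rightarrow> case P of (a',b',c') \<Rightarrow>
     (\<Sum>m\<in>{m. f m \<noteq> 0}. case m of (i,j,k) \<Rightarrow>
        smult (f m) ([:a,a':]^i * [:b,b':]^j * [:c,c':]^k)))"

text \<open>T_{L,Q}: restriction of f to L vanishes to order at least 2 at Q.\<close>
definition Tang :: "('a::field \<times> 'a \<times> 'a) set \<Rightarrow> 'a \<times> 'a \<times> 'a \<Rightarrow> 'a coeffs set" where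
  "Tang L Q = {f \<in> Rhomog. \<exists>P\<in>L. \<not> proportional P Q \<and>
                 coeff (restr f Q P) 0 = 0 \<and> coeff (restr f Q P) 1 = 0}"

definition A0 :: "('a::field \<times> 'a \<times> 'a) \<Rightarrow> 'a coeffs set" where
  "A0 Q = Rhomog - (\<Union>L\<in>Lines Q. Tang L Q)"

definition AL :: "('a::field \<times> 'a \<times> 'a) set \<Rightarrow> 'a \<times> 'a \<times> 'a \<Rightarrow> 'a coeffs set" where
  "AL L Q = Tang L Q - Sing Q"

end

theory Submission
  imports Defs "HOL-Library.Function_Algebras" "HOL-Library.Product_Plus" "HOL-Library.FuncSet"
begin

section \<open>Generic fiber counting\<close>

lemma fiber_card:
  fixes \<phi> :: "'b::ab_group_add \<Rightarrow> 'c::ab_group_add"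
  assumes cl: "\<And>x y. x \<in> V \<Longrightarrow> y \<in> V \<Longrightarrow> x + y \<in> V"
    "\<And>x y. x \<in> V \<Longrightarrow> y \<in> V \<Longrightarrow> x - y \<in> V"
    and add: "\<And>x y. x \<in> V \<Longrightarrow> y \<in> V \<Longrightarrow> \<phi> (x + y) = \<phi> x + \<phi> y"
    and x0: "x0 \<in> V"
  shows "card {x\<in>V. \<phi> x = \<phi> x0} = card {x\<in>V. \<phi> x = 0}"
proof -
  have phisub: "\<phi> (x - y) = \<phi> x - \<phi> y" if "x \<in> V" "y \<in> V" for x y
  proof -
    have "\<phi> x = \<phi> ((x - y) + y)" by simp
    also have "\<dots> = \<phi> (x - y) + \<phi> y" using add cl that by blast
    finally show ?thesis by (simp add: algebra_simps)
  qed
  have "bij_betw (\<lambda>y. y + x0) {x\<in>V. \<phi> x = 0} {x\<in>V. \<phi> x = \<phi> x0}"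
  proof (rule bij_betwI[where g = "\<lambda>y. y - x0"])
    show "(\<lambda>y. y + x0) \<in> {x \<in> V. \<phi> x = 0} \<rightarrow> {x \<in> V. \<phi> x = \<phi> x0}"
      using add cl x0 by auto
    show "(\<lambda>y. y - x0) \<in> {x \<in> V. \<phi> x = \<phi> x0} \<rightarrow> {x \<in> V. \<phi> x = 0}"
      using phisub cl x0 by auto
  qed auto
  from bij_betw_same_card[OF this] show ?thesis by simp
qed

lemma fiber_count:
  fixes \<phi> :: "'b::ab_group_add \<Rightarrow> 'c::ab_group_add"
  assumes fin: "finite V"
    and cl: "\<And>x y. x \<in> V \<Longrightarrow> y \<in> V \<Longrightarrow> x + y \<in> V"
    "\<And>x y. x \<in> V \<Longrightarrow> y \<in> V \<Longrightarrow> x - y \<in> V"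
    and add: "\<And>x y. x \<in> V \<Longrightarrow> y \<in> V \<Longrightarrow> \<phi> (x + y) = \<phi> x + \<phi> y"
  shows "card {x\<in>V. \<phi> x \<in> S} = card (S \<inter> \<phi> ` V) * card {x\<in>V. \<phi> x = 0}"
proof -
  have eq: "{x\<in>V. \<phi> x \<in> S} = (\<Union>w\<in>S \<inter> \<phi> ` V. {x\<in>V. \<phi> x = w})" by auto
  have "card (\<Union>w\<in>S \<inter> \<phi> ` V. {x\<in>V. \<phi> x = w}) = (\<Sum>w\<in>S \<inter> \<phi> ` V. card {x\<in>V. \<phi> x = w})"
    by (rule card_UN_disjoint) (use fin in auto)
  also have "\<dots> = (\<Sum>w\<in>S \<inter> \<phi> ` V. card {x\<in>V. \<phi> x = 0})"
  proof (rule sum.cong)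
    fix w assume "w \<in> S \<inter> \<phi> ` V"
    then obtain x0 where "x0 \<in> V" "w = \<phi> x0" by auto
    then show "card {x\<in>V. \<phi> x = w} = card {x\<in>V. \<phi> x = 0}"
      using fiber_card[OF cl add] by blast
  qed simp
  finally show ?thesis using eq by simp
qed

section \<open>Monomials and supports\<close>

definition Mon :: "nat \<Rightarrow> (nat \<times> nat \<times> nat) set" where
  "Mon n = {m. mdeg m = n}"

lemma finite_Mon: "finite (Mon n)"
proof -
  have "Mon n \<subseteq> {..n} \<times> {..n} \<times> {..n}" by (auto simp: Mon_def mdeg_def)
  then show ?thesis by (rule finite_subset) auto
qed

lemma Rd_supp: "f \<in> Rd n \<Longrightarrow> {m. f m \<noteq> 0} \<subseteq> Mon n"
  by (auto simp: Rd_def Mon_def)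

lemma finite_Rd: "finite (Rd n :: ('a::{finite,zero}) coeffs set)"
proof (rule inj_on_finite[where f = "\<lambda>f. restrict f (Mon n)" and B = "PiE (Mon n) (\<lambda>_. UNIV)"])
  show "inj_on (\<lambda>f. restrict f (Mon n)) (Rd n :: 'a coeffs set)"
  proof (rule inj_onI)
    fix f g :: "'a coeffs" assume "f \<in> Rd n" "g \<in> Rd n" "restrict f (Mon n) = restrict g (Mon n)"
    then show "f = g"
      by (auto simp: fun_eq_iff Rd_def Mon_def restrict_def) metis
  qed
  show "finite (PiE (Mon n) (\<lambda>_. UNIV :: 'a set))" by (rule finite_PiE) (auto simp: finite_Mon)
qed auto

lemma Rd_add: fixes f g :: "('a::ab_group_add) coeffs" shows "f \<in> Rd n \<Longrightarrow> g \<in> Rd n \<Longrightarrow> f + g \<in> Rd n"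
  proof -
  assume "f \<in> Rd n" and "g \<in> Rd n"
  moreover have "(f + g) m \<noteq> 0 \<Longrightarrow> f m \<noteq> 0 \<or> g m \<noteq> 0" for m by auto
  ultimately show ?thesis unfolding Rd_def by blast
qed
lemma Rd_diff: fixes f g :: "('a::ab_group_add) coeffs" shows "f \<in> Rd n \<Longrightarrow> g \<in> Rd n \<Longrightarrow> f - g \<in> Rd n"
  proof -
  assume "f \<in> Rd n" and "g \<in> Rd n"
  moreover have "(f - g) m \<noteq> 0 \<Longrightarrow> f m \<noteq> 0 \<or> g m \<noteq> 0" for m by auto
  ultimately show ?thesis unfolding Rd_def by blast
qed
lemma Rd_zero: "0 \<in> Rd n"
  by (auto simp: Rd_def)

lemma peval_sum:
  assumes "finite M" "{m. f m \<noteq> 0} \<subseteq> M"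
  shows "peval f (a,b,c) = (\<Sum>m\<in>M. case m of (i,j,k) \<Rightarrow> f m * a^i * b^j * c^k)"
  unfolding peval_def
  by simp (rule sum.mono_neutral_left, use assms in auto)

lemma peval_Rd:
  "f \<in> Rd n \<Longrightarrow> peval f (a,b,c) = (\<Sum>m\<in>Mon n. case m of (i,j,k) \<Rightarrow> f m * a^i * b^j * c^k)"
  by (rule peval_sum[OF finite_Mon Rd_supp])

lemma peval_add:
  assumes "f \<in> Rd n" "g \<in> Rd n"
  shows "peval (f + g) P = peval f P + peval g P"
proof -
  obtain a b c where P: "P = (a,b,c)" by (cases P)
  show ?thesis using Rd_add[OF assms] assms
    by (simp add: P peval_Rd sum.distrib[symmetric] split_def algebra_simps)
qed

lemma restr_sum:
  assumes "finite M" "{m. f m \<noteq> 0} \<subseteq> M"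
  shows "restr f (a,b,c) (a',b',c') = (\<Sum>m\<in>M. case m of (i,j,k) \<Rightarrow>
        smult (f m) ([:a,a':]^i * [:b,b':]^j * [:c,c':]^k))"
  unfolding restr_def
  by simp (rule sum.mono_neutral_left, use assms in auto)



definition grad :: "('a::field) coeffs \<Rightarrow> 'a \<times> 'a \<times> 'a \<Rightarrow> 'a \<times> 'a \<times> 'a" where
  "grad f Q = (peval (dx f) Q, peval (dy f) Q, peval (dz f) Q)"

definition dot :: "('a::field) \<times> 'a \<times> 'a \<Rightarrow> 'a \<times> 'a \<times> 'a \<Rightarrow> 'a" where
  "dot u v = fst u * fst v + fst (snd u) * fst (snd v) + snd (snd u) * snd (snd v)"

lemma dx_Rd: assumes f: "f \<in> Rd (Suc n)" shows "dx f \<in> Rd n"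
  unfolding Rd_def mem_Collect_eq
proof (intro allI impI)
  fix m assume m: "dx f m \<noteq> 0"
  obtain i j k where mm: "m = (i,j,k)" by (cases m)
  have "f (i+1,j,k) \<noteq> 0" using m by (auto simp: mm dx_def)
  then have "mdeg (i+1,j,k) = Suc n" using f by (auto simp: Rd_def)
  then show "mdeg m = n" by (simp add: mm mdeg_def)
qed
lemma dy_Rd: assumes f: "f \<in> Rd (Suc n)" shows "dy f \<in> Rd n"
  unfolding Rd_def mem_Collect_eq
proof (intro allI impI)
  fix m assume m: "dy f m \<noteq> 0"
  obtain i j k where mm: "m = (i,j,k)" by (cases m)
  have "f (i,j+1,k) \<noteq> 0" using m by (auto simp: mm dy_def)
  then have "mdeg (i,j+1,k) = Suc n" using f by (auto simp: Rd_def)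
  then show "mdeg m = n" by (simp add: mm mdeg_def)
qed
lemma dz_Rd: assumes f: "f \<in> Rd (Suc n)" shows "dz f \<in> Rd n"
  unfolding Rd_def mem_Collect_eq
proof (intro allI impI)
  fix m assume m: "dz f m \<noteq> 0"
  obtain i j k where mm: "m = (i,j,k)" by (cases m)
  have "f (i,j,k+1) \<noteq> 0" using m by (auto simp: mm dz_def)
  then have "mdeg (i,j,k+1) = Suc n" using f by (auto simp: Rd_def)
  then show "mdeg m = n" by (simp add: mm mdeg_def)
qed

lemma peval_dx:
  fixes f :: "('a::field) coeffs"
  assumes f: "f \<in> Rd (Suc n)"
  shows "peval (dx f) (a,b,c) = (\<Sum>m\<in>Mon (Suc n). case m of (i,j,k) \<Rightarrow>
            of_nat i * f m * a^(i-1) * b^j * c^k)"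
proof -
  define h where "h = (\<lambda>m. case m of (i,j,k) \<Rightarrow> of_nat i * f m * a^(i-1) * b^j * c^k)"
  define s where "s = (\<lambda>m::nat\<times>nat\<times>nat. case m of (i,j,k) \<Rightarrow> (Suc i, j, k))"
  have "peval (dx f) (a,b,c) = (\<Sum>m\<in>Mon n. case m of (i,j,k) \<Rightarrow> dx f m * a^i * b^j * c^k)"
    by (rule peval_Rd[OF dx_Rd[OF f]])
  also have "\<dots> = (\<Sum>m\<in>Mon n. h (s m))"
    by (rule sum.cong) (auto simp: h_def s_def dx_def)
  also have "\<dots> = (\<Sum>m\<in>s ` Mon n. h m)"
    by (rule sum.reindex[symmetric, unfolded comp_def]) (auto simp: s_def inj_on_def)
  also have "\<dots> = (\<Sum>m\<in>Mon (Suc n). h m)"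
  proof (rule sum.mono_neutral_left[OF finite_Mon])
    show "s ` Mon n \<subseteq> Mon (Suc n)" by (auto simp: s_def Mon_def mdeg_def)
    show "\<forall>m\<in>Mon (Suc n) - s ` Mon n. h m = 0"
    proof
      fix m assume m: "m \<in> Mon (Suc n) - s ` Mon n"
      obtain i j k where mm: "m = (i,j,k)" by (cases m)
      have "i = 0"
      proof (rule ccontr)
        assume "i \<noteq> 0"
        then have "m = s (i - 1, j, k)" "(i-1,j,k) \<in> Mon n" using m by (auto simp: mm s_def Mon_def mdeg_def)
        then show False using m by auto
      qed
      then show "h m = 0" by (simp add: h_def mm)
    qed
  qed
  finally show ?thesis by (simp add: h_def)
qed

lemma peval_dy:
  fixes f :: "('a::field) coeffs"
  assumes f: "f \<in> Rd (Suc n)"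
  shows "peval (dy f) (a,b,c) = (\<Sum>m\<in>Mon (Suc n). case m of (i,j,k) \<Rightarrow>
            of_nat j * f m * a^i * b^(j-1) * c^k)"
proof -
  define h where "h = (\<lambda>m. case m of (i,j,k) \<Rightarrow> of_nat j * f m * a^i * b^(j-1) * c^k)"
  define s where "s = (\<lambda>m::nat\<times>nat\<times>nat. case m of (i,j,k) \<Rightarrow> (i, Suc j, k))"
  have "peval (dy f) (a,b,c) = (\<Sum>m\<in>Mon n. case m of (i,j,k) \<Rightarrow> dy f m * a^i * b^j * c^k)"
    by (rule peval_Rd[OF dy_Rd[OF f]])
  also have "\<dots> = (\<Sum>m\<in>Mon n. h (s m))"
    by (rule sum.cong) (auto simp: h_def s_def dy_def)
  also have "\<dots> = (\<Sum>m\<in>s ` Mon n. h m)"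
    by (rule sum.reindex[symmetric, unfolded comp_def]) (auto simp: s_def inj_on_def)
  also have "\<dots> = (\<Sum>m\<in>Mon (Suc n). h m)"
  proof (rule sum.mono_neutral_left[OF finite_Mon])
    show "s ` Mon n \<subseteq> Mon (Suc n)" by (auto simp: s_def Mon_def mdeg_def)
    show "\<forall>m\<in>Mon (Suc n) - s ` Mon n. h m = 0"
    proof
      fix m assume m: "m \<in> Mon (Suc n) - s ` Mon n"
      obtain i j k where mm: "m = (i,j,k)" by (cases m)
      have "j = 0"
      proof (rule ccontr)
        assume "j \<noteq> 0"
        then have "m = s (i, j - 1, k)" "(i,j-1,k) \<in> Mon n" using m by (auto simp: mm s_def Mon_def mdeg_def)
        then show False using m by auto
      qed
      then show "h m = 0" by (simp add: h_def mm)
    qed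
  qed
  finally show ?thesis by (simp add: h_def)
qed

lemma peval_dz:
  fixes f :: "('a::field) coeffs"
  assumes f: "f \<in> Rd (Suc n)"
  shows "peval (dz f) (a,b,c) = (\<Sum>m\<in>Mon (Suc n). case m of (i,j,k) \<Rightarrow>
            of_nat k * f m * a^i * b^j * c^(k-1))"
proof -
  define h where "h = (\<lambda>m. case m of (i,j,k) \<Rightarrow> of_nat k * f m * a^i * b^j * c^(k-1))"
  define s where "s = (\<lambda>m::nat\<times>nat\<times>nat. case m of (i,j,k) \<Rightarrow> (i, j, Suc k))"
  have "peval (dz f) (a,b,c) = (\<Sum>m\<in>Mon n. case m of (i,j,k) \<Rightarrow> dz f m * a^i * b^j * c^k)"
    by (rule peval_Rd[OF dz_Rd[OF f]])
  also have "\<dots> = (\<Sum>m\<in>Mon n. h (s m))"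
    by (rule sum.cong) (auto simp: h_def s_def dz_def)
  also have "\<dots> = (\<Sum>m\<in>s ` Mon n. h m)"
    by (rule sum.reindex[symmetric, unfolded comp_def]) (auto simp: s_def inj_on_def)
  also have "\<dots> = (\<Sum>m\<in>Mon (Suc n). h m)"
  proof (rule sum.mono_neutral_left[OF finite_Mon])
    show "s ` Mon n \<subseteq> Mon (Suc n)" by (auto simp: s_def Mon_def mdeg_def)
    show "\<forall>m\<in>Mon (Suc n) - s ` Mon n. h m = 0"
    proof
      fix m assume m: "m \<in> Mon (Suc n) - s ` Mon n"
      obtain i j k where mm: "m = (i,j,k)" by (cases m)
      have "k = 0"
      proof (rule ccontr)
        assume "k \<noteq> 0"
        then have "m = s (i, j, k - 1)" "(i,j,k-1) \<in> Mon n" using m by (auto simp: mm s_def Mon_def mdeg_def)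
        then show False using m by auto
      qed
      then show "h m = 0" by (simp add: h_def mm)
    qed
  qed
  finally show ?thesis by (simp add: h_def)
qed

lemma coeff1_mult: "coeff (p * q) 1 = coeff p 0 * coeff q 1 + coeff p 1 * coeff q 0"
  by (simp add: coeff_mult numeral_2_eq_2)

lemma coeff_lin_pow0: "coeff ([:a,b:]^i) 0 = a^i"
  by (simp add: coeff_0_power)

lemma coeff_lin_pow1: "coeff ([:a,b:]^i) 1 = of_nat i * a^(i-1) * (b::'a::comm_ring_1)"
proof (induction i)
  case 0 then show ?case by simp
next
  case (Suc i)
  have "coeff ([:a,b:]^Suc i) 1 = a * coeff ([:a,b:]^i) 1 + b * a^i"
    by (simp add: coeff1_mult coeff_lin_pow0 del: power_Suc) (simp add: coeff_0_power)
  then show ?case using Suc by (cases i) (auto simp: algebra_simps)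
qed

lemma pow_pred: "of_nat i * (x::'a::comm_ring_1)^(i-1) * x = of_nat i * x^i"
  by (cases i) auto

lemma restr_coeff0:
  fixes f :: "('a::field) coeffs"
  assumes f: "f \<in> Rd n"
  shows "coeff (restr f (a,b,c) (a',b',c')) 0 = peval f (a,b,c)"
  by (simp add: restr_sum[OF finite_Mon Rd_supp[OF f]] peval_Rd[OF f] coeff_sum
      coeff_mult_0 coeff_lin_pow0 split_def mult.assoc)

lemma coeff1_triple:
  "coeff ([:a,a':]^i * [:b,b':]^j * [:c,c':]^k) 1 =
     a' * (of_nat i * a^(i-1) * b^j * c^k) + b' * (of_nat j * a^i * b^(j-1) * c^k)
     + c' * (of_nat k * a^i * b^j * c^(k-1::nat)) "
  for a :: "'a::comm_ring_1"
  by (simp only: coeff1_mult coeff_mult_0 coeff_lin_pow0 coeff_lin_pow1) (simp add: algebra_simps)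

lemma restr_coeff1:
  fixes f :: "('a::field) coeffs"
  assumes f: "f \<in> Rd (Suc n)"
  shows "coeff (restr f (a,b,c) (a',b',c')) 1 = dot (grad f (a,b,c)) (a',b',c')"
proof -
  define T where "T = (\<lambda>m. case m of (i,j,k) \<Rightarrow>
     a' * (of_nat i * f m * a^(i-1) * b^j * c^k) + b' * (of_nat j * f m * a^i * b^(j-1) * c^k)
     + c' * (of_nat k * f m * a^i * b^j * c^(k-1)))"
  have "coeff (restr f (a,b,c) (a',b',c')) 1 = (\<Sum>m\<in>Mon (Suc n). T m)"
    unfolding restr_sum[OF finite_Mon Rd_supp[OF f]] coeff_sum
  proof (rule sum.cong)
    fix m :: "nat \<times> nat \<times> nat"
    obtain i j k where mm: "m = (i,j,k)" by (cases m)
    show "coeff (case m of (i, j, k) \<Rightarrow> smult (f m) ([:a, a':] ^ i * [:b, b':] ^ j * [:c, c':] ^ k)) 1 = T m"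
      by (simp only: mm prod.case coeff_smult coeff1_triple T_def) (simp add: algebra_simps)
  qed simp
  also have "\<dots> = dot (grad f (a,b,c)) (a',b',c')"
    unfolding dot_def grad_def
    by (simp add: peval_dx[OF f] peval_dy[OF f] peval_dz[OF f] T_def sum.distrib sum_distrib_left sum_distrib_right split_def ac_simps)
  finally show ?thesis .
qed

lemma hx: "(of_nat i * fm * x^(i-1) * y * z) * x = of_nat i * (fm * x^i * y * (z::'a::comm_ring_1))"
  by (cases i) (simp_all add: algebra_simps)
lemma hy: "(of_nat j * fm * x * y^(j-1) * z) * y = of_nat j * (fm * x * y^j * (z::'a::comm_ring_1))"
  by (cases j) (simp_all add: algebra_simps)
lemma hz: "(of_nat k * fm * x * y * z^(k-1)) * z = of_nat k * (fm * x * y * (z::'a::comm_ring_1)^k)"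
  by (cases k) (simp_all add: algebra_simps)

lemma euler:
  fixes f :: "('a::field) coeffs"
  assumes f: "f \<in> Rd (Suc n)"
  shows "dot (grad f (a,b,c)) (a,b,c) = of_nat (Suc n) * peval f (a,b,c)"
proof -
  have ex: "peval (dx f) (a,b,c) * a = (\<Sum>m\<in>Mon (Suc n). case m of (i,j,k) \<Rightarrow> of_nat i * (f m * a^i * b^j * c^k))"
    unfolding peval_dx[OF f] sum_distrib_right
    proof (rule sum.cong)
    fix m :: "nat \<times> nat \<times> nat"
    obtain i j k where mm: "m = (i,j,k)" by (cases m)
    show "(case m of (i, j, k) \<Rightarrow> of_nat i * f m * a ^ (i - 1) * b ^ j * c ^ k) * a =
         (case m of (i, j, k) \<Rightarrow> of_nat i * (f m * a ^ i * b ^ j * c ^ k))"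
      by (simp only: mm prod.case hx)
  qed simp
  have ey: "peval (dy f) (a,b,c) * b = (\<Sum>m\<in>Mon (Suc n). case m of (i,j,k) \<Rightarrow> of_nat j * (f m * a^i * b^j * c^k))"
    unfolding peval_dy[OF f] sum_distrib_right
    proof (rule sum.cong)
    fix m :: "nat \<times> nat \<times> nat"
    obtain i j k where mm: "m = (i,j,k)" by (cases m)
    show "(case m of (i, j, k) \<Rightarrow> of_nat j * f m * a ^ i * b ^ (j - 1) * c ^ k) * b =
         (case m of (i, j, k) \<Rightarrow> of_nat j * (f m * a ^ i * b ^ j * c ^ k))"
      by (simp only: mm prod.case hy)
  qed simp
  have ez: "peval (dz f) (a,b,c) * c = (\<Sum>m\<in>Mon (Suc n). case m of (i,j,k) \<Rightarrow> of_nat k * (f m * a^i * b^j * c^k))"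
    unfolding peval_dz[OF f] sum_distrib_right
    proof (rule sum.cong)
    fix m :: "nat \<times> nat \<times> nat"
    obtain i j k where mm: "m = (i,j,k)" by (cases m)
    show "(case m of (i, j, k) \<Rightarrow> of_nat k * f m * a ^ i * b ^ j * c ^ (k - 1)) * c =
         (case m of (i, j, k) \<Rightarrow> of_nat k * (f m * a ^ i * b ^ j * c ^ k))"
      by (simp only: mm prod.case hz)
  qed simp
  have "dot (grad f (a,b,c)) (a,b,c) = (\<Sum>m\<in>Mon (Suc n). case m of (i,j,k) \<Rightarrow>
        (of_nat i + of_nat j + of_nat k) * (f m * a^i * b^j * c^k))"
    unfolding dot_def grad_def fst_conv snd_conv ex ey ez sum.distrib[symmetric]
    by (rule sum.cong) (auto split: prod.splits simp: algebra_simps)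
  also have "\<dots> = (\<Sum>m\<in>Mon (Suc n). of_nat (Suc n) * (case m of (i,j,k) \<Rightarrow>
        f m * a^i * b^j * c^k))"
  proof (rule sum.cong)
    fix m assume "m \<in> Mon (Suc n)"
    then obtain i j k where mm: "m = (i,j,k)" "i + j + k = Suc n" by (cases m) (auto simp: Mon_def mdeg_def)
    have "(of_nat i + of_nat j + of_nat k :: 'a) = of_nat (Suc n)" using mm(2) by (metis of_nat_add)
    then show "(case m of (i,j,k) \<Rightarrow> (of_nat i + of_nat j + of_nat k) * (f m * a^i * b^j * c^k))
      = of_nat (Suc n) * (case m of (i,j,k) \<Rightarrow> f m * a^i * b^j * c^k)"
      by (simp add: mm(1))
  qed simp
  finally show ?thesis by (simp add: peval_Rd[OF f] sum_distrib_left)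
qed



definition cross :: "('a::field) \<times> 'a \<times> 'a \<Rightarrow> 'a \<times> 'a \<times> 'a \<Rightarrow> 'a \<times> 'a \<times> 'a" where
  "cross u v = (fst (snd u) * snd (snd v) - snd (snd u) * fst (snd v),
                snd (snd u) * fst v - fst u * snd (snd v),
                fst u * fst (snd v) - fst (snd u) * fst v)"

definition scl :: "'a::field \<Rightarrow> 'a \<times> 'a \<times> 'a \<Rightarrow> 'a \<times> 'a \<times> 'a" where
  "scl t u = (t * fst u, t * fst (snd u), t * snd (snd u))"

lemma proportional_scl: "proportional P Q \<longleftrightarrow> (\<exists>t. P = scl t Q)"
  by (simp add: proportional_def scl_def)

lemma cross_zero_prop:
  fixes c v :: "'a::field \<times> 'a \<times> 'a"
  assumes c: "c \<noteq> (0,0,0)" and cv: "cross c v = (0,0,0)"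
  shows "proportional v c"
proof -
  obtain c1 c2 c3 where C: "c = (c1,c2,c3)" by (cases c)
  obtain v1 v2 v3 where V: "v = (v1,v2,v3)" by (cases v)
  have e: "c2 * v3 = c3 * v2" "c3 * v1 = c1 * v3" "c1 * v2 = c2 * v1"
    using cv by (auto simp: C V cross_def)
  show ?thesis
  proof (cases "c1 = 0")
    case False
    then have vv: "v = (v1/c1 * c1, v1/c1 * c2, v1/c1 * c3)"
      using e by (simp add: V field_simps)
    then show ?thesis unfolding proportional_def C fst_conv snd_conv by (rule exI[of _ "v1/c1"])
  next
    case c1: True
    show ?thesis
    proof (cases "c2 = 0")
      case False
      then have vv: "v = (v2/c2 * c1, v2/c2 * c2, v2/c2 * c3)"
        using e c1 by (simp add: V field_simps)
      then show ?thesis unfolding proportional_def C fst_conv snd_conv by (rule exI[of _ "v2/c2"])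
    next
      case c2: True
      then have "c3 \<noteq> 0" using c c1 C by auto
      then have vv: "v = (v3/c3 * c1, v3/c3 * c2, v3/c3 * c3)"
        using e c1 c2 by (simp add: V field_simps)
      then show ?thesis unfolding proportional_def C fst_conv snd_conv by (rule exI[of _ "v3/c3"])
    qed
  qed
qed

lemma prop_iff_cross:
  fixes Q P :: "'a::field \<times> 'a \<times> 'a"
  assumes "Q \<noteq> (0,0,0)"
  shows "proportional P Q \<longleftrightarrow> cross Q P = (0,0,0)"
proof
  assume "proportional P Q" then show "cross Q P = (0,0,0)"
    by (auto simp: proportional_def cross_def algebra_simps)
next
  assume "cross Q P = (0,0,0)" then show "proportional P Q" by (rule cross_zero_prop[OF assms])
qed

lemma bac_cab:
  "cross g (cross Q P) = scl (dot g P) Q - scl (dot g Q) P"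
  by (simp add: cross_def scl_def dot_def algebra_simps)

lemma dot_cross1: "dot (cross Q P) Q = 0"
  by (simp add: cross_def dot_def algebra_simps)
lemma dot_cross2: "dot (cross Q P) P = 0"
  by (simp add: cross_def dot_def algebra_simps)

lemma dot_scl: "dot (scl t u) v = t * dot u v"
  by (simp add: scl_def dot_def algebra_simps)

lemma dot_lin2: "dot g (lin2 a Q b P) = a * dot g Q + b * dot g P"
  by (simp add: lin2_def dot_def algebra_simps)

lemma dot_zero[simp]: "dot (0,0,0) v = 0"
  by (simp add: dot_def)

lemma S0_eq:
  fixes Q P :: "'a::field \<times> 'a \<times> 'a"
  assumes Q: "Q \<noteq> (0,0,0)" and P: "\<not> proportional P Q"
  shows "{g. dot g Q = 0 \<and> dot g P = 0} = range (\<lambda>t. scl t (cross Q P))"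
proof -
  have c: "cross Q P \<noteq> (0,0,0)" using prop_iff_cross[OF Q] P by simp
  show ?thesis
  proof (intro equalityI subsetI)
    fix g assume "g \<in> {g. dot g Q = 0 \<and> dot g P = 0}"
    then have "cross g (cross Q P) = (0,0,0)" by (simp add: bac_cab scl_def zero_prod_def)
    then have "cross (cross Q P) g = (0,0,0)" by (simp add: cross_def algebra_simps)
    from cross_zero_prop[OF c this] show "g \<in> range (\<lambda>t. scl t (cross Q P))"
      by (auto simp: proportional_scl)
  next
    fix g assume "g \<in> range (\<lambda>t. scl t (cross Q P))"
    then show "g \<in> {g. dot g Q = 0 \<and> dot g P = 0}"
      by (auto simp: dot_scl dot_cross1 dot_cross2)
  qed
qed

lemma card_S0:
  fixes Q P :: "'a::{finite,field} \<times> 'a \<times> 'a"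
  assumes Q: "Q \<noteq> (0,0,0)" and P: "\<not> proportional P Q"
  shows "card {g. dot g Q = 0 \<and> dot g P = 0} = card (UNIV :: 'a set)"
proof -
  have c: "cross Q P \<noteq> (0,0,0)" using prop_iff_cross[OF Q] P by simp
  have "inj (\<lambda>t. scl t (cross Q P))"
  proof (rule injI)
    fix s t assume "scl s (cross Q P) = scl t (cross Q P)"
    then show "s = t" using c by (cases "cross Q P") (auto simp: scl_def)
  qed
  then show ?thesis unfolding S0_eq[OF Q P] by (simp add: card_image)
qed

lemma lin2_Q: "lin2 a Q 0 P = scl a Q"
  by (simp add: lin2_def scl_def)

lemma line_eq:
  fixes Q P :: "'a::field \<times> 'a \<times> 'a"
  assumes "b \<noteq> 0"
  shows "line Q (lin2 a Q b P) = line Q P"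
proof -
  have 1: "lin2 u Q v (lin2 a Q b P) = lin2 (u + v * a) Q (v * b) P" for u v
    by (simp add: lin2_def algebra_simps)
  have 2: "lin2 u Q v P = lin2 (u - v / b * a) Q (v / b) (lin2 a Q b P)" for u v
    using assms by (simp add: lin2_def field_simps)
  show ?thesis unfolding line_def
  proof (intro equalityI subsetI)
    fix v assume "v \<in> {v. v \<noteq> (0, 0, 0) \<and> (\<exists>u w. v = lin2 u Q w (lin2 a Q b P))}"
    then obtain u w where "v \<noteq> (0,0,0)" "v = lin2 u Q w (lin2 a Q b P)" by blast
    then show "v \<in> {v. v \<noteq> (0, 0, 0) \<and> (\<exists>u w. v = lin2 u Q w P)}" using 1[of u w] by auto
  next
    fix v assume "v \<in> {v. v \<noteq> (0, 0, 0) \<and> (\<exists>u w. v = lin2 u Q w P)}"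
    then obtain u w where "v \<noteq> (0,0,0)" "v = lin2 u Q w P" by blast
    then show "v \<in> {v. v \<noteq> (0, 0, 0) \<and> (\<exists>u w. v = lin2 u Q w (lin2 a Q b P))}" using 2[of u w] by auto
  qed
qed

lemma line_member:
  fixes Q P :: "'a::field \<times> 'a \<times> 'a"
  assumes "v \<in> line Q P" "\<not> proportional v Q"
  shows "\<exists>a b. b \<noteq> 0 \<and> v = lin2 a Q b P"
proof -
  obtain a b where v: "v = lin2 a Q b P" using assms(1) by (auto simp: line_def)
  have "b \<noteq> 0"
  proof
    assume "b = 0"
    then have "v = scl a Q" by (simp add: v lin2_Q)
    then show False using assms(2) by (auto simp: proportional_scl)
  qed
  then show ?thesis using v by blast
qed

lemma self_in_line:
  fixes Q P :: "'a::field \<times> 'a \<times> 'a"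
  assumes "\<not> proportional P Q"
  shows "P \<in> line Q P"
proof -
  have "P \<noteq> (0,0,0)" using assms by (auto simp: proportional_def)
  moreover have "P = lin2 0 Q 1 P" by (simp add: lin2_def)
  ultimately show ?thesis unfolding line_def by blast
qed

lemma exists_nonprop_perp:
  fixes Q g :: "'a::field \<times> 'a \<times> 'a"
  assumes Q: "Q \<noteq> (0,0,0)" and gQ: "dot g Q = 0"
  shows "\<exists>P. \<not> proportional P Q \<and> dot g P = 0"
proof -
  obtain x y z where QQ: "Q = (x,y,z)" by (cases Q)
  obtain w :: "'a \<times> 'a \<times> 'a" where w: "dot Q w \<noteq> 0"
  proof (cases "x = 0")
    case False then show ?thesis using that[of "(1,0,0)"] by (simp add: QQ dot_def)
  next
    case x: True
    show ?thesis
    proof (cases "y = 0")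
      case False then show ?thesis using that[of "(0,1,0)"] x by (simp add: QQ dot_def)
    next
      case True then show ?thesis using that[of "(0,0,1)"] x Q by (simp add: QQ dot_def)
    qed
  qed
  show ?thesis
  proof (cases "g = (0,0,0)")
    case False
    have "cross Q (cross g w) = scl (dot Q w) g - scl (dot Q g) w" by (rule bac_cab)
    moreover have "dot Q g = 0" using gQ by (simp add: dot_def algebra_simps)
    ultimately have "cross Q (cross g w) = scl (dot Q w) g" by (simp add: scl_def)
    then have "cross Q (cross g w) \<noteq> (0,0,0)" using False w by (cases g) (auto simp: scl_def)
    then have "\<not> proportional (cross g w) Q" using prop_iff_cross[OF Q] by simp
    moreover have "dot g (cross g w) = 0" by (simp add: cross_def dot_def algebra_simps)
    ultimately show ?thesis by blast
  next
    case True
    have "\<exists>P. \<not> proportional P Q"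
    proof (cases "proportional (1,0,0) Q")
      case False then show ?thesis by blast
    next
      case True
      then obtain s where "(1,0,0) = (s * x, s * y, s * z)" by (auto simp: proportional_def QQ)
      then have "y = 0" by auto
      then have "\<not> proportional (0,1,0) Q" by (auto simp: proportional_def QQ)
      then show ?thesis by blast
    qed
    then show ?thesis using True by simp
  qed
qed



lemma finite_single: "finite {a}" by simp

lemma surj_x:
  fixes x y z a :: "'a::field"
  assumes x: "x \<noteq> 0" and e: "dot g (x,y,z) = of_nat (Suc n) * a"
  shows "\<exists>f\<in>Rd (Suc n). peval f (x,y,z) = a \<and> grad f (x,y,z) = g"
proof -
  obtain g1 g2 g3 where G: "g = (g1,g2,g3)" by (cases g)
  define c2 where "c2 = g2 / x^n"
  define c3 where "c3 = g3 / x^n"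
  define c0 where "c0 = (a - g2*y - g3*z) / x^(Suc n)"
  define f :: "'a coeffs" where "f = (\<lambda>m. if m = (Suc n,0,0) then c0 else if m = (n,1,0) then c2
     else if m = (n,0,1) then c3 else 0)"
  define M :: "(nat \<times> nat \<times> nat) set" where "M = {(Suc n,0,0),(n,1,0),(n,0,1)}"
  have supp: "{m. f m \<noteq> 0} \<subseteq> M" by (auto simp: f_def M_def split: if_splits)
  have fR: "f \<in> Rd (Suc n)" by (auto simp: Rd_def f_def mdeg_def)
  have fM: "finite M" by (simp add: M_def)
  have pf: "peval f (x,y,z) = a"
    unfolding peval_sum[OF fM supp] using x
    by (simp add: M_def f_def c0_def c2_def c3_def field_simps)
  have suppy: "{m. dy f m \<noteq> 0} \<subseteq> {(n,0,0)}"
  proof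
    fix m assume m0: "m \<in> {m. dy f m \<noteq> 0}"
    obtain i j k where mm: "m = (i,j,k)" by (cases m)
    have "f (i, j+1, k) \<noteq> 0" using m0 by (auto simp: dy_def mm)
    then have "(i, j+1, k) \<in> M" using supp by blast
    then show "m \<in> {(n,0,0)}" by (auto simp: M_def mm)
  qed
  have py: "peval (dy f) (x,y,z) = g2"
    unfolding peval_sum[OF finite_single suppy] using x by (simp add: dy_def f_def c2_def)
  have suppz: "{m. dz f m \<noteq> 0} \<subseteq> {(n,0,0)}"
  proof
    fix m assume m0: "m \<in> {m. dz f m \<noteq> 0}"
    obtain i j k where mm: "m = (i,j,k)" by (cases m)
    have "f (i, j, k+1) \<noteq> 0" using m0 by (auto simp: dz_def mm)
    then have "(i, j, k+1) \<in> M" using supp by blast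
    then show "m \<in> {(n,0,0)}" by (auto simp: M_def mm)
  qed
  have pz: "peval (dz f) (x,y,z) = g3"
    unfolding peval_sum[OF finite_single suppz] using x by (simp add: dz_def f_def c3_def)
  have "dot (grad f (x,y,z)) (x,y,z) = of_nat (Suc n) * peval f (x,y,z)" by (rule euler[OF fR])
  then have "peval (dx f) (x,y,z) * x + g2 * y + g3 * z = g1 * x + g2 * y + g3 * z"
    using e by (simp add: grad_def dot_def py pz pf G)
  then have "peval (dx f) (x,y,z) = g1" using x by simp
  then show ?thesis using fR pf py pz by (auto simp: grad_def G)
qed

lemma surj_y:
  fixes x y z a :: "'a::field"
  assumes y: "y \<noteq> 0" and e: "dot g (x,y,z) = of_nat (Suc n) * a"
  shows "\<exists>f\<in>Rd (Suc n). peval f (x,y,z) = a \<and> grad f (x,y,z) = g"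
proof -
  obtain g1 g2 g3 where G: "g = (g1,g2,g3)" by (cases g)
  define c1 where "c1 = g1 / y^n"
  define c3 where "c3 = g3 / y^n"
  define c0 where "c0 = (a - g1*x - g3*z) / y^(Suc n)"
  define f :: "'a coeffs" where "f = (\<lambda>m. if m = (0,Suc n,0) then c0 else if m = (1,n,0) then c1
     else if m = (0,n,1) then c3 else 0)"
  define M :: "(nat \<times> nat \<times> nat) set" where "M = {(0,Suc n,0),(1,n,0),(0,n,1)}"
  have supp: "{m. f m \<noteq> 0} \<subseteq> M" by (auto simp: f_def M_def split: if_splits)
  have fR: "f \<in> Rd (Suc n)" by (auto simp: Rd_def f_def mdeg_def)
  have fM: "finite M" by (simp add: M_def)
  have pf: "peval f (x,y,z) = a"
    unfolding peval_sum[OF fM supp] using y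
    by (simp add: M_def f_def c0_def c1_def c3_def field_simps)
  have suppx: "{m. dx f m \<noteq> 0} \<subseteq> {(0,n,0)}"
  proof
    fix m assume m0: "m \<in> {m. dx f m \<noteq> 0}"
    obtain i j k where mm: "m = (i,j,k)" by (cases m)
    have "f (i+1, j, k) \<noteq> 0" using m0 by (auto simp: dx_def mm)
    then have "(i+1, j, k) \<in> M" using supp by blast
    then show "m \<in> {(0,n,0)}" by (auto simp: M_def mm)
  qed
  have px: "peval (dx f) (x,y,z) = g1"
    unfolding peval_sum[OF finite_single suppx] using y by (simp add: dx_def f_def c1_def)
  have suppz: "{m. dz f m \<noteq> 0} \<subseteq> {(0,n,0)}"
  proof
    fix m assume m0: "m \<in> {m. dz f m \<noteq> 0}"
    obtain i j k where mm: "m = (i,j,k)" by (cases m)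
    have "f (i, j, k+1) \<noteq> 0" using m0 by (auto simp: dz_def mm)
    then have "(i, j, k+1) \<in> M" using supp by blast
    then show "m \<in> {(0,n,0)}" by (auto simp: M_def mm)
  qed
  have pz: "peval (dz f) (x,y,z) = g3"
    unfolding peval_sum[OF finite_single suppz] using y by (simp add: dz_def f_def c3_def)
  have "dot (grad f (x,y,z)) (x,y,z) = of_nat (Suc n) * peval f (x,y,z)" by (rule euler[OF fR])
  then have "g1 * x + peval (dy f) (x,y,z) * y + g3 * z = g1 * x + g2 * y + g3 * z"
    using e by (simp add: grad_def dot_def px pz pf G)
  then have "peval (dy f) (x,y,z) = g2" using y by simp
  then show ?thesis using fR pf px pz by (auto simp: grad_def G)
qed

lemma surj_z:
  fixes x y z a :: "'a::field"
  assumes z: "z \<noteq> 0" and e: "dot g (x,y,z) = of_nat (Suc n) * a"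
  shows "\<exists>f\<in>Rd (Suc n). peval f (x,y,z) = a \<and> grad f (x,y,z) = g"
proof -
  obtain g1 g2 g3 where G: "g = (g1,g2,g3)" by (cases g)
  define c1 where "c1 = g1 / z^n"
  define c2 where "c2 = g2 / z^n"
  define c0 where "c0 = (a - g1*x - g2*y) / z^(Suc n)"
  define f :: "'a coeffs" where "f = (\<lambda>m. if m = (0,0,Suc n) then c0 else if m = (1,0,n) then c1
     else if m = (0,1,n) then c2 else 0)"
  define M :: "(nat \<times> nat \<times> nat) set" where "M = {(0,0,Suc n),(1,0,n),(0,1,n)}"
  have supp: "{m. f m \<noteq> 0} \<subseteq> M" by (auto simp: f_def M_def split: if_splits)
  have fR: "f \<in> Rd (Suc n)" by (auto simp: Rd_def f_def mdeg_def)
  have fM: "finite M" by (simp add: M_def)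
  have pf: "peval f (x,y,z) = a"
    unfolding peval_sum[OF fM supp] using z
    by (simp add: M_def f_def c0_def c1_def c2_def field_simps)
  have suppx: "{m. dx f m \<noteq> 0} \<subseteq> {(0,0,n)}"
  proof
    fix m assume m0: "m \<in> {m. dx f m \<noteq> 0}"
    obtain i j k where mm: "m = (i,j,k)" by (cases m)
    have "f (i+1, j, k) \<noteq> 0" using m0 by (auto simp: dx_def mm)
    then have "(i+1, j, k) \<in> M" using supp by blast
    then show "m \<in> {(0,0,n)}" by (auto simp: M_def mm)
  qed
  have px: "peval (dx f) (x,y,z) = g1"
    unfolding peval_sum[OF finite_single suppx] using z by (simp add: dx_def f_def c1_def)
  have suppy: "{m. dy f m \<noteq> 0} \<subseteq> {(0,0,n)}"
  proof
    fix m assume m0: "m \<in> {m. dy f m \<noteq> 0}"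
    obtain i j k where mm: "m = (i,j,k)" by (cases m)
    have "f (i, j+1, k) \<noteq> 0" using m0 by (auto simp: dy_def mm)
    then have "(i, j+1, k) \<in> M" using supp by blast
    then show "m \<in> {(0,0,n)}" by (auto simp: M_def mm)
  qed
  have py: "peval (dy f) (x,y,z) = g2"
    unfolding peval_sum[OF finite_single suppy] using z by (simp add: dy_def f_def c2_def)
  have "dot (grad f (x,y,z)) (x,y,z) = of_nat (Suc n) * peval f (x,y,z)" by (rule euler[OF fR])
  then have "g1 * x + g2 * y + peval (dz f) (x,y,z) * z = g1 * x + g2 * y + g3 * z"
    using e by (simp add: grad_def dot_def px py pf G)
  then have "peval (dz f) (x,y,z) = g3" using z by simp
  then show ?thesis using fR pf px py by (auto simp: grad_def G)
qed

lemma surj_jet: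
  fixes Q :: "'a::field \<times> 'a \<times> 'a"
  assumes Q: "Q \<noteq> (0,0,0)" and e: "dot g Q = of_nat (Suc n) * a"
  shows "\<exists>f\<in>Rd (Suc n). peval f Q = a \<and> grad f Q = g"
proof -
  obtain x y z where QQ: "Q = (x,y,z)" by (cases Q)
  show ?thesis
  proof (cases "x = 0")
    case False then show ?thesis using surj_x e by (simp add: QQ)
  next
    case x: True
    show ?thesis
    proof (cases "y = 0")
      case False then show ?thesis using surj_y e by (simp add: QQ)
    next
      case True then have "z \<noteq> 0" using x Q QQ by auto
      then show ?thesis using surj_z e by (simp add: QQ)
    qed
  qed
qed



definition jet :: "('a::field) \<times> 'a \<times> 'a \<Rightarrow> 'a coeffs \<Rightarrow> 'a \<times> 'a \<times> 'a \<times> 'a" where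
  "jet Q f = (peval f Q, grad f Q)"

definition W :: "('a::field) \<times> 'a \<times> 'a \<Rightarrow> nat \<Rightarrow> ('a \<times> 'a \<times> 'a \<times> 'a) set" where
  "W Q d = {(a,g). dot g Q = of_nat d * a}"

lemma restr_c0: "f \<in> Rd n \<Longrightarrow> coeff (restr f Q P) 0 = peval f Q"
  by (cases Q; cases P) (simp add: restr_coeff0)
lemma restr_c1: "f \<in> Rd (Suc n) \<Longrightarrow> coeff (restr f Q P) 1 = dot (grad f Q) P"
  by (cases Q; cases P) (metis restr_coeff1)
lemma euler': "f \<in> Rd (Suc n) \<Longrightarrow> dot (grad f Q) Q = of_nat (Suc n) * peval f Q"
  by (cases Q) (simp add: euler)

lemma dx_add: "dx (f + h) = dx f + dx h"
  by (auto simp: dx_def fun_eq_iff algebra_simps)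
lemma dy_add: "dy (f + h) = dy f + dy h"
  by (auto simp: dy_def fun_eq_iff algebra_simps)
lemma dz_add: "dz (f + h) = dz f + dz h"
  by (auto simp: dz_def fun_eq_iff algebra_simps)

lemma jet_add:
  assumes "f \<in> Rd (Suc n)" "h \<in> Rd (Suc n)"
  shows "jet Q (f + h) = jet Q f + jet Q h"
  using assms peval_add[OF dx_Rd[OF assms(1)] dx_Rd[OF assms(2)]]
    peval_add[OF dy_Rd[OF assms(1)] dy_Rd[OF assms(2)]] peval_add[OF dz_Rd[OF assms(1)] dz_Rd[OF assms(2)]]
  by (simp add: jet_def grad_def peval_add dx_add dy_add dz_add)

lemma peval_zero: "peval 0 P = 0"
  by (cases P) (simp add: peval_def)

lemma jet_zero: "jet Q 0 = 0"
proof -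
  have "dx (0::'a coeffs) = 0" "dy (0::'a coeffs) = 0" "dz (0::'a coeffs) = 0"
    by (auto simp: dx_def dy_def dz_def fun_eq_iff)
  then show ?thesis by (simp add: jet_def grad_def peval_zero zero_prod_def)
qed

lemma jet_image:
  fixes Q :: "'a::field \<times> 'a \<times> 'a"
  assumes Q: "Q \<noteq> (0,0,0)"
  shows "jet Q ` Rd (Suc n) = W Q (Suc n)"
proof (intro equalityI subsetI)
  fix w assume "w \<in> jet Q ` Rd (Suc n)"
  then obtain f where "f \<in> Rd (Suc n)" "w = jet Q f" by auto
  then show "w \<in> W Q (Suc n)" by (simp add: jet_def W_def euler')
next
  fix w assume "w \<in> W Q (Suc n)"
  then obtain a g where w: "w = (a,g)" "dot g Q = of_nat (Suc n) * a" by (auto simp: W_def)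
  then obtain f where "f \<in> Rd (Suc n)" "peval f Q = a" "grad f Q = g" using surj_jet[OF Q] by blast
  then show "w \<in> jet Q ` Rd (Suc n)" by (auto simp: jet_def w intro!: image_eqI[of _ _ f])
qed

lemma dot_add: "dot (x + y) Q = dot x Q + dot y Q"
  by (simp add: dot_def algebra_simps)

lemma dot_surj:
  fixes Q :: "'a::field \<times> 'a \<times> 'a"
  assumes Q: "Q \<noteq> (0,0,0)"
  shows "\<exists>g. dot g Q = c"
proof -
  obtain x y z where QQ: "Q = (x,y,z)" by (cases Q)
  show ?thesis
  proof (cases "x = 0")
    case False then show ?thesis by (intro exI[of _ "(c/x,0,0)"]) (simp add: QQ dot_def)
  next
    case x: True
    show ?thesis
    proof (cases "y = 0")
      case False then show ?thesis by (intro exI[of _ "(0,c/y,0)"]) (simp add: QQ dot_def)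
    next
      case True then have "z \<noteq> 0" using x Q QQ by auto
      then show ?thesis by (intro exI[of _ "(0,0,c/z)"]) (simp add: QQ dot_def)
    qed
  qed
qed

lemma card_UNIV3: "card (UNIV :: ('a::finite \<times> 'a \<times> 'a) set) = card (UNIV :: 'a set) ^ 3"
proof -
  have "card (UNIV :: ('a \<times> 'a \<times> 'a) set) = card (UNIV :: 'a set) * (card (UNIV :: 'a set) * card (UNIV :: 'a set))"
    by (metis UNIV_Times_UNIV card_cartesian_product)
  then show ?thesis by (simp add: power3_eq_cube)
qed

lemma card_G0:
  fixes Q :: "'a::{finite,field} \<times> 'a \<times> 'a"
  assumes Q: "Q \<noteq> (0,0,0)"
  shows "card {g. dot g Q = 0} = card (UNIV :: 'a set) ^ 2"
proof -
  have "\<forall>c. \<exists>g. c = dot g Q" using dot_surj[OF Q] by metis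
  then have r: "range (\<lambda>g. dot g Q) = UNIV" by (simp add: surj_def)
  have "card {x\<in>UNIV. dot x Q \<in> UNIV} = card (UNIV \<inter> range (\<lambda>g. dot g Q)) * card {x\<in>UNIV. dot x Q = 0}"
    by (rule fiber_count) (auto simp: dot_add)
  then have "card (UNIV :: 'a set) ^ 3 = card (UNIV :: 'a set) * card {g. dot g Q = 0}"
    by (simp add: r card_UNIV3)
  moreover have "card (UNIV :: 'a set) > 0" by (simp add: card_gt_0_iff)
  ultimately show ?thesis by (simp add: power2_eq_square power3_eq_cube)
qed

lemma card_fiber:
  fixes Q :: "'a::{finite,field} \<times> 'a \<times> 'a"
  assumes Q: "Q \<noteq> (0,0,0)"
  shows "card {g. dot g Q = c} = card (UNIV :: 'a set) ^ 2"
proof -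
  obtain g0 where g0: "dot g0 Q = c" using dot_surj[OF Q] by blast
  have "card {x\<in>UNIV. dot x Q = dot g0 Q} = card {x\<in>UNIV. dot x Q = 0}"
    by (rule fiber_card) (auto simp: dot_add)
  then show ?thesis using card_G0[OF Q] g0 by simp
qed

lemma W_Sigma: "W Q d \<inter> {(a,g). a \<in> A} = (SIGMA a:A. {g. dot g Q = of_nat d * a})"
  by (auto simp: W_def)

lemma card_W_part:
  fixes Q :: "'a::{finite,field} \<times> 'a \<times> 'a"
  assumes Q: "Q \<noteq> (0,0,0)"
  shows "card (W Q d \<inter> {(a,g). a \<in> A}) = card A * card (UNIV :: 'a set) ^ 2"
  unfolding W_Sigma by (subst card_SigmaI) (auto simp: card_fiber[OF Q])

lemma card_W:
  fixes Q :: "'a::{finite,field} \<times> 'a \<times> 'a"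
  assumes Q: "Q \<noteq> (0,0,0)"
  shows "card (W Q d) = card (UNIV :: 'a set) ^ 3"
  using card_W_part[OF Q, of d UNIV] by (simp add: power2_eq_square power3_eq_cube)

lemma mu_formula:
  fixes Q :: "'a::{finite,field} \<times> 'a \<times> 'a"
  assumes Q: "Q \<noteq> (0,0,0)" and A: "A \<inter> Rd (Suc n) = {f\<in>Rd (Suc n). jet Q f \<in> S}"
  shows "mu_d (Suc n) A = real (card (S \<inter> W Q (Suc n))) / real (card (W Q (Suc n)))"
proof -
  define K where "K = card {f\<in>Rd (Suc n). jet Q f = 0}"
  have cnt: "card {f\<in>Rd (Suc n). jet Q f \<in> T} = card (T \<inter> W Q (Suc n)) * K" for T
    unfolding K_def jet_image[OF Q, symmetric]
    by (rule fiber_count) (auto simp: finite_Rd Rd_add Rd_diff jet_add)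
  have "0 \<in> {f\<in>Rd (Suc n). jet Q f = 0}" by (simp add: Rd_zero jet_zero)
  moreover have "finite {f\<in>Rd (Suc n). jet Q f = 0}" by (rule finite_subset[OF _ finite_Rd]) auto
  ultimately have "K > 0" unfolding K_def card_gt_0_iff by blast
  have "card (A \<inter> Rd (Suc n)) = card (S \<inter> W Q (Suc n)) * K" using cnt A by simp
  moreover have "card (Rd (Suc n) :: 'a coeffs set) = card (W Q (Suc n)) * K" using cnt[of UNIV] by simp
  ultimately show ?thesis using \<open>K > 0\<close> by (simp add: mu_d_def)
qed



lemma Rd_Rhomog: "f \<in> Rd (Suc n) \<Longrightarrow> f \<in> Rhomog"
  unfolding Rhomog_def by auto

lemma tang_char:
  fixes Q P0 :: "'a::field \<times> 'a \<times> 'a"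
  assumes Q: "Q \<noteq> (0,0,0)" and P0: "\<not> proportional P0 Q" and f: "f \<in> Rd (Suc n)"
  shows "f \<in> Tang (line Q P0) Q \<longleftrightarrow> peval f Q = 0 \<and> dot (grad f Q) P0 = 0"
proof
  assume "f \<in> Tang (line Q P0) Q"
  then obtain P where P: "P \<in> line Q P0" "\<not> proportional P Q"
    "coeff (restr f Q P) 0 = 0" "coeff (restr f Q P) 1 = 0" by (auto simp: Tang_def)
  have pf: "peval f Q = 0" using P(3) restr_c0[OF f] by simp
  have gP: "dot (grad f Q) P = 0" using P(4) restr_c1[OF f] by simp
  have gQ: "dot (grad f Q) Q = 0" using euler'[OF f] pf by simp
  obtain a b where ab: "b \<noteq> 0" "P = lin2 a Q b P0" using line_member[OF P(1,2)] by blast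
  have "b * dot (grad f Q) P0 = 0" using gP gQ by (simp add: ab dot_lin2)
  then show "peval f Q = 0 \<and> dot (grad f Q) P0 = 0" using ab(1) pf by simp
next
  assume h: "peval f Q = 0 \<and> dot (grad f Q) P0 = 0"
  show "f \<in> Tang (line Q P0) Q"
    unfolding Tang_def using self_in_line[OF P0] P0 h Rd_Rhomog[OF f] restr_c0[OF f] restr_c1[OF f]
    by auto
qed

lemma A0_char:
  fixes Q :: "'a::field \<times> 'a \<times> 'a"
  assumes Q: "Q \<noteq> (0,0,0)" and f: "f \<in> Rd (Suc n)"
  shows "f \<in> A0 Q \<longleftrightarrow> peval f Q \<noteq> 0"
proof
  assume A: "f \<in> A0 Q"
  show "peval f Q \<noteq> 0"
  proof
    assume pf: "peval f Q = 0"
    have gQ: "dot (grad f Q) Q = 0" using euler'[OF f] pf by simp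
    obtain P where P: "\<not> proportional P Q" "dot (grad f Q) P = 0"
      using exists_nonprop_perp[OF Q gQ] by blast
    have "f \<in> Tang (line Q P) Q" using tang_char[OF Q P(1) f] pf P(2) by simp
    moreover have "line Q P \<in> Lines Q" using P(1) unfolding Lines_def by blast
    ultimately show False using A by (auto simp: A0_def)
  qed
next
  assume pf: "peval f Q \<noteq> 0"
  have "f \<notin> Tang L Q" for L
    using pf restr_c0[OF f] by (auto simp: Tang_def)
  then show "f \<in> A0 Q" using Rd_Rhomog[OF f] by (auto simp: A0_def)
qed

lemma sing_char:
  "f \<in> Rd (Suc n) \<Longrightarrow> f \<in> Sing Q \<longleftrightarrow> peval f Q = 0 \<and> grad f Q = (0,0,0)"
  using Rd_Rhomog by (auto simp: Sing_def grad_def)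

abbreviation qq :: "'a::finite itself \<Rightarrow> nat" where
  "qq _ \<equiv> card (UNIV :: 'a set)"

lemma mu_A0:
  fixes Q :: "'a::{finite,field} \<times> 'a \<times> 'a"
  assumes Q: "Q \<noteq> (0,0,0)"
  shows "mu_d (Suc n) (A0 Q) = (real (card (UNIV :: 'a set)) - 1) / real (card (UNIV :: 'a set))"
proof -
  have A: "A0 Q \<inter> Rd (Suc n) = {f\<in>Rd (Suc n). jet Q f \<in> {(a,g). a \<in> UNIV - {0}}}"
    by (auto simp: jet_def A0_char[OF Q])
  have c: "card ({(a,g). a \<in> UNIV - {0}} \<inter> W Q (Suc n)) = (card (UNIV :: 'a set) - 1) * card (UNIV :: 'a set) ^ 2"
    using card_W_part[OF Q, of "Suc n" "UNIV - {0}"] by (simp add: Int_commute card_Diff_singleton)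
  have q0: "card (UNIV :: 'a set) > 0" by (simp add: card_gt_0_iff)
  show ?thesis unfolding mu_formula[OF Q A] c card_W[OF Q]
    using q0 by (simp add: of_nat_diff power2_eq_square power3_eq_cube field_simps)
qed

lemma S0_W:
  fixes Q P0 :: "'a::field \<times> 'a \<times> 'a"
  shows "{(a,g). a = 0 \<and> dot g P0 = 0 \<and> R g} \<inter> W Q d = {0} \<times> {g. dot g Q = 0 \<and> dot g P0 = 0 \<and> R g}"
  by (auto simp: W_def)

lemma mu_Tang:
  fixes Q P0 :: "'a::{finite,field} \<times> 'a \<times> 'a"
  assumes Q: "Q \<noteq> (0,0,0)" and P0: "\<not> proportional P0 Q"
  shows "mu_d (Suc n) (Tang (line Q P0) Q) = 1 / real (card (UNIV :: 'a set)) ^ 2"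
proof -
  have A: "Tang (line Q P0) Q \<inter> Rd (Suc n) = {f\<in>Rd (Suc n). jet Q f \<in> {(a,g). a = 0 \<and> dot g P0 = 0 \<and> True}}"
    by (auto simp: jet_def tang_char[OF Q P0])
  have c: "card ({(a,g). a = 0 \<and> dot g P0 = 0 \<and> True} \<inter> W Q (Suc n)) = card (UNIV :: 'a set)"
    unfolding S0_W using card_S0[OF Q P0] by (simp add: card_cartesian_product_singleton)
  have q0: "card (UNIV :: 'a set) > 0" by (simp add: card_gt_0_iff)
  show ?thesis unfolding mu_formula[OF Q A] c card_W[OF Q]
    using q0 by (simp add: power2_eq_square power3_eq_cube field_simps)
qed

lemma mu_nTang:
  fixes Q P0 :: "'a::{finite,field} \<times> 'a \<times> 'a"
  assumes Q: "Q \<noteq> (0,0,0)" and P0: "\<not> proportional P0 Q"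
  shows "mu_d (Suc n) (Rhomog - Tang (line Q P0) Q) = 1 - 1 / real (card (UNIV :: 'a set)) ^ 2"
proof -
  define S :: "('a \<times> 'a \<times> 'a \<times> 'a) set" where "S = {(a,g). a = 0 \<and> dot g P0 = 0 \<and> True}"
  have A: "(Rhomog - Tang (line Q P0) Q) \<inter> Rd (Suc n) = {f\<in>Rd (Suc n). jet Q f \<in> - S}"
    by (auto simp: jet_def S_def tang_char[OF Q P0] Rd_Rhomog)
  have c: "card (S \<inter> W Q (Suc n)) = card (UNIV :: 'a set)"
    unfolding S_def S0_W using card_S0[OF Q P0] by (simp add: card_cartesian_product_singleton)
  have "- S \<inter> W Q (Suc n) = W Q (Suc n) - (S \<inter> W Q (Suc n))" by auto
  then have c2: "card (- S \<inter> W Q (Suc n)) = card (UNIV :: 'a set) ^ 3 - card (UNIV :: 'a set)"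
    by (simp add: card_Diff_subset c card_W[OF Q])
  have q0: "card (UNIV :: 'a set) > 0" by (simp add: card_gt_0_iff)
  have le: "card (UNIV :: 'a set) \<le> card (UNIV :: 'a set) ^ 3"
    using q0 by (simp add: power3_eq_cube)
  show ?thesis unfolding mu_formula[OF Q A] c2 card_W[OF Q]
    using q0 le by (simp add: of_nat_diff power2_eq_square power3_eq_cube field_simps)
qed

lemma mu_AL:
  fixes Q P0 :: "'a::{finite,field} \<times> 'a \<times> 'a"
  assumes Q: "Q \<noteq> (0,0,0)" and P0: "\<not> proportional P0 Q"
  shows "mu_d (Suc n) (AL (line Q P0) Q) = (real (card (UNIV :: 'a set)) - 1) / real (card (UNIV :: 'a set)) ^ 3"
proof -
  have A: "AL (line Q P0) Q \<inter> Rd (Suc n) = {f\<in>Rd (Suc n). jet Q f \<in> {(a,g). a = 0 \<and> dot g P0 = 0 \<and> g \<noteq> (0,0,0)}}"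
    by (auto simp: jet_def AL_def tang_char[OF Q P0] sing_char)
  have "{g. dot g Q = 0 \<and> dot g P0 = 0 \<and> g \<noteq> (0,0,0)} = {g. dot g Q = 0 \<and> dot g P0 = 0} - {(0,0,0)}"
    by auto
  then have "card {g. dot g Q = 0 \<and> dot g P0 = 0 \<and> g \<noteq> (0,0,0)} = card (UNIV :: 'a set) - 1"
    using card_S0[OF Q P0] by (simp add: card_Diff_singleton)
  then have c: "card ({(a,g). a = 0 \<and> dot g P0 = 0 \<and> g \<noteq> (0,0,0)} \<inter> W Q (Suc n)) = card (UNIV :: 'a set) - 1"
    unfolding S0_W by (simp add: card_cartesian_product_singleton)
  have q0: "card (UNIV :: 'a set) > 0" by (simp add: card_gt_0_iff)
  show ?thesis unfolding mu_formula[OF Q A] c card_W[OF Q]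
    using q0 by (simp add: of_nat_diff)
qed



definition SL :: "('a::field \<times> 'a \<times> 'a) \<Rightarrow> ('a \<times> 'a \<times> 'a) set \<Rightarrow> ('a \<times> 'a \<times> 'a) set" where
  "SL Q L = {g. g \<noteq> (0,0,0) \<and> dot g Q = 0 \<and> (\<exists>P\<in>L. \<not> proportional P Q \<and> dot g P = 0)}"

lemma SL_eq:
  fixes Q P0 :: "'a::field \<times> 'a \<times> 'a"
  assumes Q: "Q \<noteq> (0,0,0)" and P0: "\<not> proportional P0 Q"
  shows "SL Q (line Q P0) = {g. dot g Q = 0 \<and> dot g P0 = 0} - {(0,0,0)}"
proof (intro equalityI subsetI)
  fix g assume "g \<in> SL Q (line Q P0)"
  then obtain P where g: "g \<noteq> (0,0,0)" "dot g Q = 0" "P \<in> line Q P0" "\<not> proportional P Q" "dot g P = 0"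
    by (auto simp: SL_def)
  obtain a b where ab: "b \<noteq> 0" "P = lin2 a Q b P0" using line_member[OF g(3,4)] by blast
  have "b * dot g P0 = 0" using g ab by (simp add: dot_lin2)
  then show "g \<in> {g. dot g Q = 0 \<and> dot g P0 = 0} - {(0,0,0)}" using ab g by simp
next
  fix g assume "g \<in> {g. dot g Q = 0 \<and> dot g P0 = 0} - {(0,0,0)}"
  then show "g \<in> SL Q (line Q P0)" using self_in_line[OF P0] P0 by (auto simp: SL_def)
qed

lemma card_SL:
  fixes Q P0 :: "'a::{finite,field} \<times> 'a \<times> 'a"
  assumes Q: "Q \<noteq> (0,0,0)" and P0: "\<not> proportional P0 Q"
  shows "card (SL Q (line Q P0)) = card (UNIV :: 'a set) - 1"
  unfolding SL_eq[OF Q P0] using card_S0[OF Q P0] by (simp add: card_Diff_singleton)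

lemma SL_disj:
  fixes Q P P' :: "'a::field \<times> 'a \<times> 'a"
  assumes Q: "Q \<noteq> (0,0,0)" and P: "\<not> proportional P Q" and P': "\<not> proportional P' Q"
    and g: "g \<in> SL Q (line Q P)" "g \<in> SL Q (line Q P')"
  shows "line Q P' = line Q P"
proof -
  have g1: "g \<in> {g. dot g Q = 0 \<and> dot g P = 0}" "g \<noteq> (0,0,0)" using g(1) SL_eq[OF Q P] by auto
  have g2: "g \<in> {g. dot g Q = 0 \<and> dot g P' = 0}" using g(2) SL_eq[OF Q P'] by auto
  obtain t where t: "g = scl t (cross Q P)" using g1(1) S0_eq[OF Q P] by auto
  obtain s where s: "g = scl s (cross Q P')" using g2 S0_eq[OF Q P'] by auto
  have s0: "s \<noteq> 0" using s g1(2) by (auto simp: scl_def)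
  have t0: "t \<noteq> 0" using t g1(2) by (auto simp: scl_def)
  have "cross Q (lin2 t P (- s) P') = scl t (cross Q P) - scl s (cross Q P')"
    by (simp add: cross_def lin2_def scl_def algebra_simps)
  also have "\<dots> = (0,0,0)" using t s by (simp add: zero_prod_def[symmetric])
  finally have "proportional (lin2 t P (- s) P') Q" using prop_iff_cross[OF Q] by simp
  then obtain al where al: "lin2 t P (- s) P' = scl al Q" by (auto simp: proportional_scl)
  have "P' = lin2 (- al / s) Q (t / s) P"
    using al s0 by (cases P; cases P'; cases Q) (simp add: lin2_def scl_def field_simps)
  then show ?thesis using line_eq[where a="- al / s" and b="t / s" and Q=Q and P=P] t0 s0 by simp
qed

lemma card_field_ge2: "card (UNIV :: 'a::{finite,field} set) \<ge> 2"
proof -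
  have "{0, 1::'a} \<subseteq> UNIV" by simp
  then have "card {0, 1::'a} \<le> card (UNIV :: 'a set)" by (rule card_mono[OF finite])
  then show ?thesis by simp
qed

lemma Lines_bound:
  fixes Q :: "'a::{finite,field} \<times> 'a \<times> 'a"
  assumes Q: "Q \<noteq> (0,0,0)"
  shows "card (Lines Q) \<le> card (UNIV :: 'a set) + 1"
proof -
  define q where "q = card (UNIV :: 'a set)"
  have q2: "q \<ge> 2" unfolding q_def by (rule card_field_ge2)
  have fin: "finite (Lines Q)" by (rule finite)
  have cL: "card (SL Q L) = q - 1" if "L \<in> Lines Q" for L
    using that card_SL[OF Q] unfolding Lines_def q_def by auto
  have disj: "SL Q L \<inter> SL Q L' = {}" if L: "L \<in> Lines Q" and L': "L' \<in> Lines Q" and ne: "L \<noteq> L'" for L L'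
  proof -
    obtain P where P: "L = line Q P" "\<not> proportional P Q" using L unfolding Lines_def by blast
    obtain P' where P': "L' = line Q P'" "\<not> proportional P' Q" using L' unfolding Lines_def by blast
    show ?thesis using SL_disj[OF Q P(2) P'(2)] P P' ne by blast
  qed
  have "card (\<Union>L\<in>Lines Q. SL Q L) = (\<Sum>L\<in>Lines Q. card (SL Q L))"
    by (rule card_UN_disjoint[OF fin]) (auto intro: finite dest: disj)
  also have "\<dots> = card (Lines Q) * (q - 1)" using cL by simp
  finally have e: "card (\<Union>L\<in>Lines Q. SL Q L) = card (Lines Q) * (q - 1)" .
  have "(\<Union>L\<in>Lines Q. SL Q L) \<subseteq> {g. dot g Q = 0} - {(0,0,0)}" by (auto simp: SL_def)
  then have "card (\<Union>L\<in>Lines Q. SL Q L) \<le> card ({g. dot g Q = 0} - {(0,0,0)})"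
    by (rule card_mono[OF finite])
  also have "\<dots> = q^2 - 1" using card_G0[OF Q] by (simp add: card_Diff_singleton q_def)
  finally have "card (Lines Q) * (q - 1) \<le> q^2 - 1" using e by simp
  also have "q^2 - 1 = (q + 1) * (q - 1)" using q2 by (simp add: power2_eq_square algebra_simps diff_mult_distrib)
  finally have "card (Lines Q) * (q - 1) \<le> (q + 1) * (q - 1)" .
  moreover have "q - 1 > 0" using q2 by simp
  ultimately have "card (Lines Q) \<le> q + 1" by (rule mult_right_le_imp_le)
  then show ?thesis by (simp add: q_def)
qed

lemma ineqs:
  fixes q N :: nat
  assumes q: "q \<ge> 2" and N: "N \<le> q + 1"
  shows "(real q - 1) / real q \<le> 1 / (1 - 1 / real q ^ 2) * (1 - 1 / real q ^ 2) ^ N"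
    and "(real q - 1) / real q ^ 3 \<le> 1 / real q ^ 2 * (1 - 1 / real q ^ 2) ^ (N - 1)"
proof -
  define x where "x = 1 / real q ^ 2"
  define y where "y = 1 - x"
  have x0: "0 < x" "x < 1" using q by (auto simp: x_def)
  have y0: "0 < y" "y < 1" using x0 by (auto simp: y_def)
  have b: "1 - real q * x \<le> y ^ q"
    using Bernoulli_inequality[of "- x" q] x0 by (simp add: y_def)
  have mx: "real q * x = 1 / real q" using q by (simp add: x_def power2_eq_square)
  have base: "(real q - 1) / real q \<le> y ^ q" using b mx q by (simp add: diff_divide_distrib)
  have "y ^ (q + 1) \<le> y ^ N" by (rule power_decreasing) (use N y0 in auto)
  then have "y ^ q * y \<le> y ^ N" by (simp add: mult.commute)
  then have "y ^ q \<le> y ^ N / y" using y0 by (simp add: pos_le_divide_eq)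
  then have "y ^ q \<le> 1 / y * y ^ N" by simp
  then show "(real q - 1) / real q \<le> 1 / (1 - 1 / real q ^ 2) * (1 - 1 / real q ^ 2) ^ N"
    using base unfolding y_def x_def by linarith
  have "y ^ q \<le> y ^ (N - 1)" by (rule power_decreasing) (use N y0 in auto)
  then have "(real q - 1) / real q \<le> y ^ (N - 1)" using base by linarith
  then have "x * ((real q - 1) / real q) \<le> x * y ^ (N - 1)" using x0 by (intro mult_left_mono) auto
  moreover have "x * ((real q - 1) / real q) = (real q - 1) / real q ^ 3"
    using q by (simp add: x_def power2_eq_square power3_eq_cube)
  ultimately show "(real q - 1) / real q ^ 3 \<le> 1 / real q ^ 2 * (1 - 1 / real q ^ 2) ^ (N - 1)"
    unfolding y_def x_def by (simp add: power2_eq_square power3_eq_cube)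
qed



lemma mu_const:
  assumes "\<And>n. mu_d (Suc n) A = c"
  shows "mu A = mu_d (Suc 0) A"
proof -
  have "(\<lambda>n. mu_d (Suc n) A) \<longlonglongrightarrow> c" using assms by simp
  then have "(\<lambda>n. mu_d n A) \<longlonglongrightarrow> c" by (rule LIMSEQ_imp_Suc)
  then have "mu A = c" unfolding mu_def by (rule limI)
  then show ?thesis using assms by simp
qed

theorem lemma4p6:
  fixes Q :: "'a::{finite,field} \<times> 'a \<times> 'a"
  assumes "Q \<noteq> (0,0,0)"
  shows "(\<exists>D. \<forall>d\<ge>D.
            mu_d d (A0 Q) \<le> 1 / (1 - 1 / real (card (UNIV :: 'a set)) ^ 2) *
                (\<Prod>L\<in>Lines Q. mu_d d (Rhomog - Tang L Q))
          \<and> (\<forall>Lj\<in>Lines Q. mu_d d (AL Lj Q) \<le>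
                mu_d d (Tang Lj Q) * (\<Prod>L\<in>Lines Q - {Lj}. mu_d d (Rhomog - Tang L Q))))
       \<and> mu (A0 Q) \<le> 1 / (1 - 1 / real (card (UNIV :: 'a set)) ^ 2) *
                (\<Prod>L\<in>Lines Q. mu (Rhomog - Tang L Q))
       \<and> (\<forall>Lj\<in>Lines Q. mu (AL Lj Q) \<le>
                mu (Tang Lj Q) * (\<Prod>L\<in>Lines Q - {Lj}. mu (Rhomog - Tang L Q)))"
proof -
  note Q = assms
  define q where "q = card (UNIV :: 'a set)"
  have q2: "q \<ge> 2" unfolding q_def by (rule card_field_ge2)
  define N where "N = card (Lines Q)"
  have NB: "N \<le> q + 1" unfolding N_def q_def by (rule Lines_bound[OF Q])
  have fin: "finite (Lines Q)" by (rule finite)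
  have vA0: "mu_d (Suc n) (A0 Q) = (real q - 1) / real q" for n
    unfolding q_def by (rule mu_A0[OF Q])
  have vnT: "mu_d (Suc n) (Rhomog - Tang L Q) = 1 - 1 / real q ^ 2" if "L \<in> Lines Q" for n L
    using that mu_nTang[OF Q] unfolding Lines_def q_def by auto
  have vT: "mu_d (Suc n) (Tang L Q) = 1 / real q ^ 2" if "L \<in> Lines Q" for n L
    using that mu_Tang[OF Q] unfolding Lines_def q_def by auto
  have vAL: "mu_d (Suc n) (AL L Q) = (real q - 1) / real q ^ 3" if "L \<in> Lines Q" for n L
    using that mu_AL[OF Q] unfolding Lines_def q_def by auto
  have main: "mu_d (Suc n) (A0 Q) \<le> 1 / (1 - 1 / real q ^ 2) *
                (\<Prod>L\<in>Lines Q. mu_d (Suc n) (Rhomog - Tang L Q))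
          \<and> (\<forall>Lj\<in>Lines Q. mu_d (Suc n) (AL Lj Q) \<le>
                mu_d (Suc n) (Tang Lj Q) * (\<Prod>L\<in>Lines Q - {Lj}. mu_d (Suc n) (Rhomog - Tang L Q)))" for n
  proof
    have "(\<Prod>L\<in>Lines Q. mu_d (Suc n) (Rhomog - Tang L Q)) = (1 - 1 / real q ^ 2) ^ N"
      using vnT by (simp add: N_def)
    then show "mu_d (Suc n) (A0 Q) \<le> 1 / (1 - 1 / real q ^ 2) *
                (\<Prod>L\<in>Lines Q. mu_d (Suc n) (Rhomog - Tang L Q))"
      using ineqs(1)[OF q2 NB] vA0 by simp
    show "\<forall>Lj\<in>Lines Q. mu_d (Suc n) (AL Lj Q) \<le>
                mu_d (Suc n) (Tang Lj Q) * (\<Prod>L\<in>Lines Q - {Lj}. mu_d (Suc n) (Rhomog - Tang L Q))"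
    proof
      fix Lj assume Lj: "Lj \<in> Lines Q"
      have "(\<Prod>L\<in>Lines Q - {Lj}. mu_d (Suc n) (Rhomog - Tang L Q)) = (1 - 1 / real q ^ 2) ^ (N - 1)"
        using vnT Lj fin by (simp add: N_def card_Diff_singleton)
      then show "mu_d (Suc n) (AL Lj Q) \<le>
                mu_d (Suc n) (Tang Lj Q) * (\<Prod>L\<in>Lines Q - {Lj}. mu_d (Suc n) (Rhomog - Tang L Q))"
        using ineqs(2)[OF q2 NB] vAL[OF Lj] vT[OF Lj] by simp
    qed
  qed
  have part1: "\<exists>D. \<forall>d\<ge>D.
            mu_d d (A0 Q) \<le> 1 / (1 - 1 / real q ^ 2) *
                (\<Prod>L\<in>Lines Q. mu_d d (Rhomog - Tang L Q))
          \<and> (\<forall>Lj\<in>Lines Q. mu_d d (AL Lj Q) \<le>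
                mu_d d (Tang Lj Q) * (\<Prod>L\<in>Lines Q - {Lj}. mu_d d (Rhomog - Tang L Q)))"
  proof (intro exI[of _ 1] allI impI)
    fix d :: nat assume "d \<ge> 1"
    then obtain n where "d = Suc n" by (cases d) auto
    then show "mu_d d (A0 Q) \<le> 1 / (1 - 1 / real q ^ 2) *
                (\<Prod>L\<in>Lines Q. mu_d d (Rhomog - Tang L Q))
          \<and> (\<forall>Lj\<in>Lines Q. mu_d d (AL Lj Q) \<le>
                mu_d d (Tang Lj Q) * (\<Prod>L\<in>Lines Q - {Lj}. mu_d d (Rhomog - Tang L Q)))"
      using main by simp
  qed
  have eA0: "mu (A0 Q) = mu_d (Suc 0) (A0 Q)" by (rule mu_const[OF vA0])
  have enT: "mu (Rhomog - Tang L Q) = mu_d (Suc 0) (Rhomog - Tang L Q)" if "L \<in> Lines Q" for L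
    by (rule mu_const[OF vnT[OF that]])
  have eT: "mu (Tang L Q) = mu_d (Suc 0) (Tang L Q)" if "L \<in> Lines Q" for L
    by (rule mu_const[OF vT[OF that]])
  have eAL: "mu (AL L Q) = mu_d (Suc 0) (AL L Q)" if "L \<in> Lines Q" for L
    by (rule mu_const[OF vAL[OF that]])
  have p1: "(\<Prod>L\<in>Lines Q. mu (Rhomog - Tang L Q)) = (\<Prod>L\<in>Lines Q. mu_d (Suc 0) (Rhomog - Tang L Q))"
    by (rule prod.cong) (auto simp: enT)
  have p2: "(\<Prod>L\<in>Lines Q - {Lj}. mu (Rhomog - Tang L Q)) = (\<Prod>L\<in>Lines Q - {Lj}. mu_d (Suc 0) (Rhomog - Tang L Q))" for Lj
    by (rule prod.cong) (auto simp: enT)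
  show ?thesis
    using part1 main[of 0] unfolding q_def[symmetric]
    by (simp add: eA0 p1 p2 eT eAL)
qed


end
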